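(* Let $X_1,X_2,\ldots$ be i.i.d. real random variables distributed as $X$, with distribution function $F$ having finite variance. Let $\hat F_n$ be the empirical distribution function of $X_1,\ldots,X_n$. For $t$ with $\mathbb P(X>t)>0$, let $X_t$ be a random variable distributed as $X$ conditional on $X>t$, and set $\mathrm{Var}\,X_t=0$ if $\mathbb P(X>t)=0$. If $\mathrm{Var}\,X_t\to\infty$ as $t\to\infty$, then $n^{1/2}d_2(\hat F_n,F)\to\infty$ almost surely as $n\to\infty$.
   Context: The Mallows distance between distribution functions $F,G$ with finite second moments is \[ d_2(F,G)=\inf\{(\mathbb E|X-Y|^2)^{1/2}\}, \] where the infimum is over all couplings with marginals $F$ and $G$. Equivalently, \[ d_2(F,G)=\Bigl(\int_0^1|F^{-1}(p)-G^{-1}(p)|^2dp\Bigr)^{1/2}, \] with $F^{-1}(p)=\inf\{x:F(x)\ge p\}$. The empirical distribution function is $\hat F_n(x)=n^{-1}\sum_{i=1}^n\mathbf 1_{\{X_i\le x\}}$. *)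

theory Defs
  imports "HOL-Probability.Probability"
begin

definition quantile :: "(real \<Rightarrow> real) \<Rightarrow> real \<Rightarrow> real" where
  "quantile G p = Inf {x. p \<le> G x}"

text \<open>Mallows distance via the quantile representation (integral over (0,1);
  the endpoints form a null set).\<close>
definition mallows_d2 :: "(real \<Rightarrow> real) \<Rightarrow> (real \<Rightarrow> real) \<Rightarrow> real" where
  "mallows_d2 F G = sqrt (LBINT p:{0<..<1}. \<bar>quantile F p - quantile G p\<bar>\<^sup>2)"

text \<open>Empirical distribution function of the first n observations X 0, ..., X (n-1).\<close>
definition ecdf :: "(nat \<Rightarrow> 'a \<Rightarrow> real) \<Rightarrow> nat \<Rightarrow> 'a \<Rightarrow> real \<Rightarrow> real" where
  "ecdf X n \<omega> x = real (card {i \<in> {..<n}. X i \<omega> \<le> x}) / real n"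

definition cdf_of :: "real measure \<Rightarrow> real \<Rightarrow> real" where
  "cdf_of \<mu> x = measure \<mu> {..x}"

definition tail_var :: "real measure \<Rightarrow> real \<Rightarrow> real" where
  "tail_var \<mu> t =
     (if measure \<mu> {t<..} > 0 then
        (let p = measure \<mu> {t<..};
             m = (\<integral>x. indicator {t<..} x * x \<partial>\<mu>) / p
         in (\<integral>x. indicator {t<..} x * (x - m)\<^sup>2 \<partial>\<mu>) / p)
      else 0)"

end

theory Submission
  imports Defs
begin

lemma ind_integrables:
  fixes \<mu> :: "real measure"
  assumes rd: "real_distribution \<mu>" and sq: "integrable \<mu> (\<lambda>x. x\<^sup>2)" and A: "A \<in> sets borel"
  shows "integrable \<mu> (\<lambda>x. indicator A x * x\<^sup>2)" "integrable \<mu> (\<lambda>x. indicator A x * x)"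
    "integrable \<mu> (indicator A :: real \<Rightarrow> real)"
proof -
  interpret real_distribution \<mu> by fact
  have sA: "A \<in> sets \<mu>" using A by simp
  show "integrable \<mu> (indicator A :: real \<Rightarrow> real)" using sA by (intro integrable_real_indicator) (auto simp: emeasure_eq_measure)
  show "integrable \<mu> (\<lambda>x. indicator A x * x\<^sup>2)"
    proof (rule Bochner_Integration.integrable_bound[OF sq])
    show "(\<lambda>x. indicator A x * x\<^sup>2) \<in> borel_measurable \<mu>" using sA by measurable
  qed (auto simp: indicator_def)
  have "integrable \<mu> (\<lambda>x. 1 + x\<^sup>2)" using sq by simp
  then show "integrable \<mu> (\<lambda>x. indicator A x * x)"
  proof (rule Bochner_Integration.integrable_bound)
    show "(\<lambda>x. indicator A x * x) \<in> borel_measurable \<mu>" using sA by measurable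
    show "AE x in \<mu>. norm (indicator A x * x) \<le> norm (1 + x\<^sup>2)"
    proof (intro AE_I2)
      fix x :: real
      have h: "0 \<le> (\<bar>x\<bar> - 1)\<^sup>2" by simp
      have e: "(\<bar>x\<bar> - 1)\<^sup>2 = x * x - 2 * \<bar>x\<bar> + 1"
        by (simp add: power2_eq_square algebra_simps abs_mult_self_eq)
      have "0 \<le> x * x" by simp
      with h e have "\<bar>x\<bar> \<le> 1 + x\<^sup>2" unfolding power2_eq_square by linarith
      then show "norm (indicator A x * x) \<le> norm (1 + x\<^sup>2)" by (auto simp: indicator_def)
    qed
  qed
qed

lemma ind_expand:
  fixes \<mu> :: "real measure"
  assumes rd: "real_distribution \<mu>" and sq: "integrable \<mu> (\<lambda>x. x\<^sup>2)" and A: "A \<in> sets borel"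
  shows "(\<integral>x. indicator A x * (x - c)\<^sup>2 \<partial>\<mu>) =
    (\<integral>x. indicator A x * x\<^sup>2 \<partial>\<mu>) - 2 * c * (\<integral>x. indicator A x * x \<partial>\<mu>) + c\<^sup>2 * measure \<mu> A"
proof -
  interpret real_distribution \<mu> by fact
  note I = ind_integrables[OF rd sq A]
  have "(\<lambda>x. indicator A x * (x - c)\<^sup>2) = (\<lambda>x. (indicator A x * x\<^sup>2 - (2 * c) * (indicator A x * x)) + c\<^sup>2 * indicator A x)"
    by (auto simp: power2_eq_square algebra_simps)
  then have "(\<integral>x. indicator A x * (x - c)\<^sup>2 \<partial>\<mu>) = (\<integral>x. (indicator A x * x\<^sup>2 - (2 * c) * (indicator A x * x)) + c\<^sup>2 * indicator A x \<partial>\<mu>)"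
    by simp
  also have "\<dots> = (\<integral>x. indicator A x * x\<^sup>2 \<partial>\<mu>) - 2 * c * (\<integral>x. indicator A x * x \<partial>\<mu>) + c\<^sup>2 * (\<integral>x. indicator A x \<partial>\<mu>)"
    using I by (simp add: integral_add integral_diff)
  also have "(\<integral>x. indicator A x \<partial>\<mu>) = measure \<mu> A" by simp
  finally show ?thesis .
qed

lemma tail_bound:
  fixes \<mu> :: "real measure"
  assumes rd: "real_distribution \<mu>" and sq: "integrable \<mu> (\<lambda>x. x\<^sup>2)"
    and pos: "0 < measure \<mu> {t<..}"
  shows "measure \<mu> {t<..} * tail_var \<mu> t \<le> (\<integral>x. indicator {t<..} x * (x - c)\<^sup>2 \<partial>\<mu>)"
proof -
  define p where "p = measure \<mu> {t<..}"
  define I1 where "I1 = (\<integral>x. indicator {t<..} x * x \<partial>\<mu>)"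
  define I2 where "I2 = (\<integral>x. indicator {t<..} x * x\<^sup>2 \<partial>\<mu>)"
  define m where "m = I1 / p"
  have pp: "0 < p" using pos p_def by simp
  have e1: "(\<integral>x. indicator {t<..} x * (x - c)\<^sup>2 \<partial>\<mu>) = I2 - 2 * c * I1 + c\<^sup>2 * p"
    unfolding I1_def I2_def p_def by (rule ind_expand[OF rd sq]) simp
  have e2: "(\<integral>x. indicator {t<..} x * (x - m)\<^sup>2 \<partial>\<mu>) = I2 - 2 * m * I1 + m\<^sup>2 * p"
    unfolding I1_def I2_def p_def by (rule ind_expand[OF rd sq]) simp
  have tv: "tail_var \<mu> t = (\<integral>x. indicator {t<..} x * (x - m)\<^sup>2 \<partial>\<mu>) / p"
    using pos unfolding tail_var_def m_def I1_def p_def by (simp add: Let_def)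
  have "p * tail_var \<mu> t = I2 - I1\<^sup>2 / p"
  proof -
    have "p * tail_var \<mu> t = p * ((I2 - 2 * m * I1 + m\<^sup>2 * p) / p)" by (simp only: tv e2)
    also have "\<dots> = I2 - I1\<^sup>2 / p" using pp unfolding m_def by (simp add: field_simps power2_eq_square)
    finally show ?thesis .
  qed
  also have "\<dots> \<le> I2 - 2 * c * I1 + c\<^sup>2 * p"
  proof -
    have "I2 - 2 * c * I1 + c\<^sup>2 * p - (I2 - I1\<^sup>2 / p) = (c * p - I1)\<^sup>2 / p"
      using pp by (simp add: field_simps power2_eq_square)
    also have "\<dots> \<ge> 0" using pp by simp
    finally show ?thesis by simp
  qed
  finally show ?thesis using e1 p_def by simp
qed

lemma lim_left:
  fixes \<mu> :: "real measure" and g :: "real \<Rightarrow> real"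
  assumes rd: "real_distribution \<mu>" and ig: "integrable \<mu> g"
  shows "(\<lambda>k. \<integral>x. indicator {t - 1 / Suc k<..} x * g x \<partial>\<mu>) \<longlonglongrightarrow> (\<integral>x. indicator {t..} x * g x \<partial>\<mu>)"
proof -
  interpret real_distribution \<mu> by fact
  have gm: "g \<in> borel_measurable \<mu>" using ig by auto
  show ?thesis
  proof (rule integral_dominated_convergence[where w="\<lambda>x. \<bar>g x\<bar>"])
    show "(\<lambda>x. indicator {t..} x * g x) \<in> borel_measurable \<mu>" using gm by measurable
    show "(\<lambda>x. indicator {t - 1 / Suc k<..} x * g x) \<in> borel_measurable \<mu>" for k using gm by measurable
    show "integrable \<mu> (\<lambda>x. \<bar>g x\<bar>)" using ig by simp
    show "AE x in \<mu>. norm (indicator {t - 1 / Suc k<..} x * g x) \<le> \<bar>g x\<bar>" for k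
      by (auto simp: indicator_def)
    show "AE x in \<mu>. (\<lambda>k. indicator {t - 1 / Suc k<..} x * g x) \<longlonglongrightarrow> indicator {t..} x * g x"
    proof (intro AE_I2)
      fix x :: real
      show "(\<lambda>k. indicator {t - 1 / Suc k<..} x * g x) \<longlonglongrightarrow> indicator {t..} x * g x"
      proof (cases "t \<le> x")
        case True
        have "t - 1 / Suc k < x" for k
          using True by (smt (verit) of_nat_0_less_iff zero_less_Suc divide_pos_pos)
        then show ?thesis using True by (simp add: indicator_def)
      next
        case False
        have "\<forall>\<^sub>F k in sequentially. 1 / real (Suc k) < t - x"
          using False LIMSEQ_inverse_real_of_nat by (intro order_tendstoD(2)) (auto simp: inverse_eq_divide)
        then have "\<forall>\<^sub>F k in sequentially. indicator {t - 1 / Suc k<..} x * g x = indicator {t..} x * g x"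
          by eventually_elim (use False in \<open>auto simp: indicator_def\<close>)
        then show ?thesis by (rule tendsto_eventually)
      qed
    qed
  qed
qed

lemma ind_sq_integrable:
  fixes \<mu> :: "real measure"
  assumes rd: "real_distribution \<mu>" and sq: "integrable \<mu> (\<lambda>x. x\<^sup>2)" and A: "A \<in> sets borel"
  shows "integrable \<mu> (\<lambda>x. indicator A x * (x - c)\<^sup>2)"
proof -
  note I = ind_integrables[OF rd sq A]
  have "(\<lambda>x. indicator A x * (x - c)\<^sup>2) = (\<lambda>x. (indicator A x * x\<^sup>2 - (2 * c) * (indicator A x * x)) + c\<^sup>2 * indicator A x)"
    by (auto simp: power2_eq_square algebra_simps)
  then show ?thesis using I by simp
qed

lemma quantile_facts:
  fixes \<mu> :: "real measure"
  assumes rd: "real_distribution \<mu>"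
  shows "\<And>p x. 0 < p \<Longrightarrow> p < 1 \<Longrightarrow> p \<le> cdf \<mu> x \<longleftrightarrow> quantile (cdf \<mu>) p \<le> x"
    and "mono_on {0<..<1} (quantile (cdf \<mu>))"
    and "quantile (cdf \<mu>) \<in> borel_measurable (restrict_space lborel {0<..<1})"
    and "distr (restrict_space lborel {0<..<1}) borel (quantile (cdf \<mu>)) = \<mu>"
proof -
  interpret c: cdf_distribution \<mu> using rd by (simp add: cdf_distribution_def)
  show "\<And>p x. 0 < p \<Longrightarrow> p < 1 \<Longrightarrow> p \<le> cdf \<mu> x \<longleftrightarrow> quantile (cdf \<mu>) p \<le> x"
    unfolding quantile_def by (rule c.pseudoinverse)
  show "mono_on {0<..<1} (quantile (cdf \<mu>))"
    unfolding quantile_def by (rule c.mono_I)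
  show "quantile (cdf \<mu>) \<in> borel_measurable (restrict_space lborel {0<..<1})"
    unfolding quantile_def using c.measurable_CI
    by (simp add: measurable_cong_sets[OF sets_restrict_space_cong[OF sets_lborel]])
  show "distr (restrict_space lborel {0<..<1}) borel (quantile (cdf \<mu>)) = \<mu>"
    unfolding quantile_def by (rule c.distr_I_eq_M)
qed

lemma LQ:
  fixes \<mu> :: "real measure"
  assumes rd: "real_distribution \<mu>" and sq: "integrable \<mu> (\<lambda>x. x\<^sup>2)"
    and s: "0 < s" "s < 1" and t: "t = quantile (cdf \<mu>) s" and Ft: "cdf \<mu> t < 1"
  shows "(\<integral>p. indicator {s<..} p * (quantile (cdf \<mu>) p - c)\<^sup>2 \<partial>(restrict_space lborel {0<..<1}))
     = (cdf \<mu> t - s) * (t - c)\<^sup>2 + (\<integral>x. indicator {t<..} x * (x - c)\<^sup>2 \<partial>\<mu>)"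
proof -
  define \<Omega> where "\<Omega> = restrict_space lborel {0<..<1::real}"
  define Q where "Q = quantile (cdf \<mu>)"
  note qf = quantile_facts[OF rd, folded Q_def \<Omega>_def]
  have Qm: "Q \<in> measurable \<Omega> borel" using qf(3) .
  have sp: "space \<Omega> = {0<..<1}" by (simp add: \<Omega>_def)
  have sFt: "s \<le> cdf \<mu> t" using qf(1)[OF s] t Q_def by simp
  define f where "f = (\<lambda>x. indicator {t<..} x * (x - c)\<^sup>2 :: real)"
  have fi: "integrable \<mu> f" unfolding f_def by (rule ind_sq_integrable[OF rd sq]) simp
  have fm: "f \<in> borel_measurable borel" unfolding f_def by measurable
  have pw: "indicator {s<..} p * (Q p - c)\<^sup>2 = f (Q p) + (t - c)\<^sup>2 * indicator {s<..cdf \<mu> t} p"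
    if p: "p \<in> space \<Omega>" for p
  proof -
    have p01: "0 < p" "p < 1" using p sp by auto
    show ?thesis
    proof (cases "p \<le> s")
      case True
      have "Q p \<le> Q s" using qf(2) True p01 s by (auto intro: mono_onD)
      then show ?thesis using True t Q_def by (simp add: f_def indicator_def)
    next
      case False
      show ?thesis
      proof (cases "p \<le> cdf \<mu> t")
        case True
        have "Q p \<le> t" using qf(1)[OF p01] True by simp
        moreover have "Q s \<le> Q p" using qf(2) False p01 s by (auto intro: mono_onD)
        ultimately have "Q p = t" using t Q_def by simp
        then show ?thesis using True False by (simp add: f_def indicator_def)
      next
        case False2: False
        have "\<not> Q p \<le> t" using qf(1)[OF p01] False2 by simp
        then show ?thesis using False False2 by (simp add: f_def indicator_def)
      qed
    qed
  qed
  have i1: "integrable \<Omega> (\<lambda>p. f (Q p))"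
    using fi qf(4) integrable_distr_eq[OF Qm fm] by simp
  have sub: "{s<..cdf \<mu> t} \<subseteq> {0<..<1}" using s Ft by auto
  have i2: "integrable \<Omega> (\<lambda>p. (t - c)\<^sup>2 * indicator {s<..cdf \<mu> t} p :: real)"
  proof -
    have "integrable \<Omega> (indicator {s<..cdf \<mu> t} :: real \<Rightarrow> real)"
      unfolding \<Omega>_def
      using sub by (intro integrable_real_indicator) (auto simp: sets_restrict_space_iff emeasure_restrict_space Int_absorb2 sFt)
    then show ?thesis by simp
  qed
  have "(\<integral>p. indicator {s<..} p * (Q p - c)\<^sup>2 \<partial>\<Omega>) = (\<integral>p. f (Q p) + (t - c)\<^sup>2 * indicator {s<..cdf \<mu> t} p \<partial>\<Omega>)"
    by (rule Bochner_Integration.integral_cong[OF refl pw])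
  also have "\<dots> = (\<integral>p. f (Q p) \<partial>\<Omega>) + (t - c)\<^sup>2 * (\<integral>p. indicator {s<..cdf \<mu> t} p \<partial>\<Omega>)"
    using i1 i2 by simp
  also have "(\<integral>p. f (Q p) \<partial>\<Omega>) = (\<integral>x. f x \<partial>\<mu>)"
    using integral_distr[OF Qm fm] qf(4) by simp
  also have "(\<integral>p. indicator {s<..cdf \<mu> t} p \<partial>\<Omega>) = cdf \<mu> t - s"
  proof -
    have "(\<integral>p. indicator {s<..cdf \<mu> t} p \<partial>\<Omega>) = measure \<Omega> ({s<..cdf \<mu> t} \<inter> space \<Omega>)" by simp
    also have "\<dots> = measure lborel {s<..cdf \<mu> t}"
      using sub unfolding \<Omega>_def by (subst measure_restrict_space) (auto simp: Int_absorb2)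
    also have "\<dots> = cdf \<mu> t - s" using sFt by simp
    finally show ?thesis .
  qed
  finally show ?thesis unfolding f_def Q_def \<Omega>_def by simp
qed

lemma ecdf_facts:
  fixes X :: "nat \<Rightarrow> 'a \<Rightarrow> real" and \<omega> :: 'a
  assumes n: "1 \<le> n"
  defines "c \<equiv> Max ((\<lambda>i. X i \<omega>) ` {..<n})" and "m0 \<equiv> Min ((\<lambda>i. X i \<omega>) ` {..<n})"
  shows "\<And>p. 0 < p \<Longrightarrow> p \<le> 1 \<Longrightarrow> m0 \<le> quantile (ecdf X n \<omega>) p \<and> quantile (ecdf X n \<omega>) p \<le> c"
    and "\<And>p. 1 - 1 / n < p \<Longrightarrow> p \<le> 1 \<Longrightarrow> quantile (ecdf X n \<omega>) p = c"
    and "mono_on {0<..<1} (quantile (ecdf X n \<omega>))"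
proof -
  define G where "G = ecdf X n \<omega>"
  have ne: "(\<lambda>i. X i \<omega>) ` {..<n} \<noteq> {}" using n by (auto simp: lessThan_empty_iff)
  have Xc: "X i \<omega> \<le> c" if "i < n" for i
    unfolding c_def by (rule Max_ge) (use that in auto)
  have Xm: "m0 \<le> X i \<omega>" if "i < n" for i
    unfolding m0_def by (rule Min_le) (use that in auto)
  have G1: "G x = 1" if "c \<le> x" for x
  proof -
    have "{i \<in> {..<n}. X i \<omega> \<le> x} = {..<n}"
      using that Xc by (auto intro: order_trans)
    then show ?thesis using n by (simp add: G_def ecdf_def)
  qed
  have G2: "G x \<le> 1 - 1 / n" if "x < c" for x
  proof -
    obtain i0 where i0: "i0 < n" "X i0 \<omega> = c"
      using Max_in[OF _ ne] unfolding c_def by auto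
    have "{i \<in> {..<n}. X i \<omega> \<le> x} \<subseteq> {..<n} - {i0}" using i0 that by auto
    then have "card {i \<in> {..<n}. X i \<omega> \<le> x} \<le> card ({..<n} - {i0})" by (intro card_mono) auto
    also have "\<dots> = n - 1" using i0 by simp
    finally have "real (card {i \<in> {..<n}. X i \<omega> \<le> x}) \<le> real n - 1" using n by linarith
    then have "G x \<le> (real n - 1) / n" unfolding G_def ecdf_def by (intro divide_right_mono) auto
    also have "\<dots> = 1 - 1 / n" using n by (simp add: field_simps)
    finally show ?thesis .
  qed
  have G0: "G x = 0" if "x < m0" for x
  proof -
    have "{i \<in> {..<n}. X i \<omega> \<le> x} = {}"
      using that Xm by (auto dest!: le_less_trans)
    then show ?thesis by (simp add: G_def ecdf_def)
  qed
  have S: "c \<in> {x. p \<le> G x}" "\<And>x. x \<in> {x. p \<le> G x} \<Longrightarrow> m0 \<le> x" if "0 < p" "p \<le> 1" for p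
    using that G1 G0 by (auto intro!: leI)
  have A: "m0 \<le> quantile G p \<and> quantile G p \<le> c" if "0 < p" "p \<le> 1" for p
    using S[OF that] unfolding quantile_def
    by (auto intro!: cInf_lower cInf_greatest bdd_belowI[of _ m0])
  then show "\<And>p. 0 < p \<Longrightarrow> p \<le> 1 \<Longrightarrow> m0 \<le> quantile (ecdf X n \<omega>) p \<and> quantile (ecdf X n \<omega>) p \<le> c"
    unfolding G_def by blast
  show "quantile (ecdf X n \<omega>) p = c" if "1 - 1 / n < p" "p \<le> 1" for p
  proof -
    have "{x. p \<le> G x} = {c..}"
      using that G1 G2 by (auto intro!: leI) (metis not_le order.strict_trans1 G2)
    then show ?thesis unfolding G_def quantile_def by simp
  qed
  show "mono_on {0<..<1} (quantile (ecdf X n \<omega>))"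
  proof (rule mono_onI)
    fix p p' :: real assume "p \<in> {0<..<1}" "p' \<in> {0<..<1}" "p \<le> p'"
    then show "quantile (ecdf X n \<omega>) p \<le> quantile (ecdf X n \<omega>) p'"
      using S[of p] S[of p'] unfolding G_def quantile_def
      by (intro cInf_superset_mono) (auto intro!: bdd_belowI[of _ m0])
  qed
qed

lemma Ld:
  fixes \<mu> :: "real measure" and X :: "nat \<Rightarrow> 'a \<Rightarrow> real" and \<omega> :: 'a
  assumes rd: "real_distribution \<mu>" and sq: "integrable \<mu> (\<lambda>x. x\<^sup>2)" and n: "1 \<le> n"
  shows "(\<integral>p. indicator {1 - 1 / n<..} p * (quantile (cdf \<mu>) p - Max ((\<lambda>i. X i \<omega>) ` {..<n}))\<^sup>2 \<partial>(restrict_space lborel {0<..<1}))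
     \<le> (LBINT p:{0<..<1}. \<bar>quantile (ecdf X n \<omega>) p - quantile (cdf \<mu>) p\<bar>\<^sup>2)"
proof -
  define \<Omega> where "\<Omega> = restrict_space lborel {0<..<1::real}"
  define Q where "Q = quantile (cdf \<mu>)"
  define H where "H = quantile (ecdf X n \<omega>)"
  define c where "c = Max ((\<lambda>i. X i \<omega>) ` {..<n})"
  define m0 where "m0 = Min ((\<lambda>i. X i \<omega>) ` {..<n})"
  define B where "B = max \<bar>c\<bar> \<bar>m0\<bar>"
  note qf = quantile_facts[OF rd, folded Q_def \<Omega>_def]
  note ef = ecdf_facts[OF n, where X=X and \<omega>=\<omega>, folded H_def c_def m0_def]
  have Qm: "Q \<in> measurable \<Omega> borel" using qf(3) .
  have sp: "space \<Omega> = {0<..<1}" by (simp add: \<Omega>_def)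
  have Hm: "H \<in> borel_measurable \<Omega>"
    using borel_measurable_mono_on_fnc[OF ef(3)] unfolding \<Omega>_def
    by (simp add: measurable_cong_sets[OF sets_restrict_space_cong[OF sets_lborel]])
  have iQ2: "integrable \<Omega> (\<lambda>p. (Q p - c)\<^sup>2)"
  proof -
    have "integrable \<mu> (\<lambda>x. indicator UNIV x * (x - c)\<^sup>2)" by (rule ind_sq_integrable[OF rd sq]) simp
    then have "integrable \<mu> (\<lambda>x. (x - c)\<^sup>2)" by simp
    then show ?thesis using qf(4) integrable_distr_eq[OF Qm, of "\<lambda>x. (x - c)\<^sup>2"] by simp
  qed
  have iQ: "integrable \<Omega> (\<lambda>p. (Q p)\<^sup>2)"
    using sq qf(4) integrable_distr_eq[OF Qm, of "\<lambda>x. x\<^sup>2"] by simp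
  have i1: "integrable \<Omega> (\<lambda>p. indicator {1 - 1 / n<..} p * (Q p - c)\<^sup>2)"
  proof (rule Bochner_Integration.integrable_bound[OF iQ2])
    show "(\<lambda>p. indicator {1 - 1 / n<..} p * (Q p - c)\<^sup>2) \<in> borel_measurable \<Omega>"
      using Qm by (intro borel_measurable_times) (auto simp: \<Omega>_def intro!: measurable_restrict_space1)
  qed (auto simp: indicator_def)
  have i2: "integrable \<Omega> (\<lambda>p. \<bar>H p - Q p\<bar>\<^sup>2)"
  proof (rule Bochner_Integration.integrable_bound)
    show "integrable \<Omega> (\<lambda>p. 2 * B\<^sup>2 + 2 * (Q p)\<^sup>2)"
    proof (rule Bochner_Integration.integrable_add)
      have "finite_measure \<Omega>" unfolding \<Omega>_def
        by (intro finite_measureI) (simp add: space_restrict_space emeasure_restrict_space)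
      then show "integrable \<Omega> (\<lambda>p. 2 * B\<^sup>2)" by (rule finite_measure.integrable_const)
      show "integrable \<Omega> (\<lambda>p. 2 * (Q p)\<^sup>2)" using iQ by simp
    qed
    show "(\<lambda>p. \<bar>H p - Q p\<bar>\<^sup>2) \<in> borel_measurable \<Omega>" using Hm Qm by measurable
    show "AE p in \<Omega>. norm (\<bar>H p - Q p\<bar>\<^sup>2) \<le> norm (2 * B\<^sup>2 + 2 * (Q p)\<^sup>2)"
    proof (rule AE_I2)
      fix p assume "p \<in> space \<Omega>"
      then have "0 < p" "p \<le> 1" using sp by auto
      then have hb: "\<bar>H p\<bar> \<le> B" using ef(1) unfolding B_def by fastforce
      have "(H p)\<^sup>2 \<le> B\<^sup>2" using hb by (metis abs_le_square_iff abs_of_nonneg abs_ge_zero order.trans)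
      moreover have "\<bar>H p - Q p\<bar>\<^sup>2 \<le> 2 * (H p)\<^sup>2 + 2 * (Q p)\<^sup>2"
        using sum_squares_ge_zero[of "H p + Q p" 0] by (simp add: power2_eq_square algebra_simps)
      ultimately show "norm (\<bar>H p - Q p\<bar>\<^sup>2) \<le> norm (2 * B\<^sup>2 + 2 * (Q p)\<^sup>2)" by simp
    qed
  qed
  have "(\<integral>p. indicator {1 - 1 / n<..} p * (Q p - c)\<^sup>2 \<partial>\<Omega>) \<le> (\<integral>p. \<bar>H p - Q p\<bar>\<^sup>2 \<partial>\<Omega>)"
  proof (rule integral_mono[OF i1 i2])
    fix p assume "p \<in> space \<Omega>"
    then have p: "0 < p" "p < 1" using sp by auto
    show "indicator {1 - 1 / n<..} p * (Q p - c)\<^sup>2 \<le> \<bar>H p - Q p\<bar>\<^sup>2"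
    proof (cases "1 - 1 / n < p")
      case True
      then have "H p = c" using ef(2) p by simp
      then show ?thesis using True by (simp add: power2_commute)
    qed simp
  qed
  also have "(\<integral>p. \<bar>H p - Q p\<bar>\<^sup>2 \<partial>\<Omega>) = (LBINT p:{0<..<1}. \<bar>H p - Q p\<bar>\<^sup>2)"
    unfolding \<Omega>_def set_lebesgue_integral_def by (subst integral_restrict_space) auto
  finally show ?thesis unfolding Q_def H_def c_def \<Omega>_def .
qed

lemma arith_key:
  fixes w q a D E1 K :: real
  assumes "0 \<le> w" "0 \<le> q" "0 \<le> D" "0 \<le> K" "w \<le> a" "q * K \<le> E1" "(a + q) * K \<le> a * D + E1"
  shows "(w + q) * K / 2 \<le> w * D + E1"
proof (cases "w \<le> q")
  case True
  have "w * K \<le> q * K" using True assms by (intro mult_right_mono) auto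
  then have "(w + q) * K / 2 \<le> q * K" by (simp add: field_simps)
  also have "\<dots> \<le> E1" by fact
  also have "\<dots> \<le> w * D + E1" using assms by simp
  finally show ?thesis .
next
  case False
  have qK: "0 \<le> q * K" using assms by simp
  have a: "0 < a" using False assms by linarith
  have wa: "w / a \<le> 1" "0 \<le> w / a" using a assms by auto
  have E0: "E1 \<ge> 0" using qK assms by linarith
  have h1: "(w / a) * E1 \<le> E1" by (rule mult_left_le_one_le[OF E0 wa(2) wa(1)])
  have h2: "(w / a) * (a * D + E1) = w * D + (w / a) * E1" using a by (simp add: algebra_simps)
  have h3: "(w / a) * ((a + q) * K) \<le> (w / a) * (a * D + E1)"
    using wa assms by (intro mult_left_mono) auto
  have h4: "(w + q) / 2 \<le> w * (a + q) / a"
  proof -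
    have "q * a \<le> w * a" using False a by (intro mult_right_mono) auto
    moreover have "0 \<le> q * w" using assms by simp
    ultimately have le: "(w * a + q * a) / 2 \<le> w * a + q * w" by (simp add: field_simps)
    have "(w + q) / 2 * a = (w * a + q * a) / 2" by (simp add: algebra_simps)
    also have "\<dots> \<le> w * a + q * w" by (rule le)
    also have "\<dots> = w * (a + q)" by (simp add: algebra_simps)
    finally have "(w + q) / 2 * a \<le> w * (a + q)" .
    then show ?thesis using a by (simp add: pos_le_divide_eq)
  qed
  have "(w + q) / 2 * K \<le> w * (a + q) / a * K" using h4 assms(4) by (rule mult_right_mono)
  moreover have "w * (a + q) / a * K = (w / a) * ((a + q) * K)" by simp
  moreover have "(w + q) * K / 2 = (w + q) / 2 * K" by simp
  ultimately show ?thesis using h1 h2 h3 by linarith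
qed

lemma cdf_compl:
  fixes \<mu> :: "real measure"
  assumes rd: "real_distribution \<mu>"
  shows "measure \<mu> {t<..} = 1 - cdf \<mu> t"
proof -
  interpret real_distribution \<mu> by fact
  have "measure \<mu> (space \<mu> - {..t}) = 1 - measure \<mu> {..t}" by (rule prob_compl) simp
  moreover have "space \<mu> - {..t} = {t<..}" by auto
  ultimately show ?thesis by (simp add: cdf_def)
qed

lemma tv_pos:
  assumes "0 < tail_var \<mu> t" shows "0 < measure \<mu> {t<..}"
  using assms unfolding tail_var_def by (auto split: if_splits)

lemma main_bound:
  fixes \<mu> :: "real measure"
  assumes rd: "real_distribution \<mu>" and sq: "integrable \<mu> (\<lambda>x. x\<^sup>2)"
    and K: "0 < K" and T: "\<And>t. T \<le> t \<Longrightarrow> K \<le> tail_var \<mu> t"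
    and s: "cdf \<mu> T < s" "s < 1"
  shows "(1 - s) * K / 2 \<le> (\<integral>p. indicator {s<..} p * (quantile (cdf \<mu>) p - c)\<^sup>2 \<partial>(restrict_space lborel {0<..<1}))"
proof -
  interpret real_distribution \<mu> by fact
  define Q where "Q = quantile (cdf \<mu>)"
  note qf = quantile_facts[OF rd, folded Q_def]
  have s0: "0 < s" using s cdf_nonneg[of T] by linarith
  define t where "t = Q s"
  have tT: "T < t"
  proof (rule ccontr)
    assume "\<not> T < t"
    then have "s \<le> cdf \<mu> T" using qf(1)[OF s0 s(2)] t_def by simp
    then show False using s by simp
  qed
  define q where "q = measure \<mu> {t<..}"
  have q0: "0 < q" unfolding q_def using T[of t] tT K by (intro tv_pos) simp
  have cdft: "cdf \<mu> t = 1 - q" using cdf_compl[OF rd, of t] q_def by simp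
  have sFt: "s \<le> cdf \<mu> t" using qf(1)[OF s0 s(2)] t_def by simp
  define D where "D = (t - c)\<^sup>2"
  define E1 where "E1 = (\<integral>x. indicator {t<..} x * (x - c)\<^sup>2 \<partial>\<mu>)"
  define E2 where "E2 = (\<integral>x. indicator {t..} x * (x - c)\<^sup>2 \<partial>\<mu>)"
  define a where "a = measure \<mu> {t}"
  have E1K: "q * K \<le> E1"
  proof -
    have "q * K \<le> q * tail_var \<mu> t" using T[of t] tT q0 by (intro mult_left_mono) auto
    also have "\<dots> \<le> E1" unfolding q_def E1_def by (rule tail_bound[OF rd sq]) (use q0 q_def in simp)
    finally show ?thesis .
  qed
  have LQ': "(\<integral>p. indicator {s<..} p * (Q p - c)\<^sup>2 \<partial>(restrict_space lborel {0<..<1})) = (cdf \<mu> t - s) * D + E1"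
    unfolding Q_def D_def E1_def by (rule LQ[OF rd sq s0 s(2)]) (use t_def Q_def cdft q0 in auto)
  have E2eq: "E2 = a * D + E1"
  proof -
    have "(\<lambda>x. indicator {t..} x * (x - c)\<^sup>2) = (\<lambda>x. indicator {t<..} x * (x - c)\<^sup>2 + D * indicator {t} x)"
      by (auto simp: indicator_def D_def)
    moreover have "integrable \<mu> (\<lambda>x. indicator {t<..} x * (x - c)\<^sup>2)" by (rule ind_sq_integrable[OF rd sq]) simp
    moreover have "integrable \<mu> (\<lambda>x. D * indicator {t} x :: real)"
      by (intro integrable_mult_right integrable_real_indicator) (auto simp: emeasure_eq_measure)
    ultimately show ?thesis unfolding E2_def E1_def a_def by (simp add: mult.commute)
  qed
  have req: "measure \<mu> {t..} = a + q"
  proof -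
    have "{t..} = {t} \<union> {t<..}" by auto
    then have "measure \<mu> {t..} = measure \<mu> ({t} \<union> {t<..})" by simp
    also have "\<dots> = measure \<mu> {t} + measure \<mu> {t<..}" by (rule finite_measure_Union) auto
    finally show ?thesis unfolding a_def q_def .
  qed
  define tk where "tk = (\<lambda>k::nat. t - 1 / Suc k)"
  have L1: "(\<lambda>k. \<integral>x. indicator {tk k<..} x * (x - c)\<^sup>2 \<partial>\<mu>) \<longlonglongrightarrow> E2"
    unfolding tk_def E2_def
  proof (rule lim_left[OF rd])
    have "integrable \<mu> (\<lambda>x. indicator UNIV x * (x - c)\<^sup>2)" by (rule ind_sq_integrable[OF rd sq]) simp
    then show "integrable \<mu> (\<lambda>x. (x - c)\<^sup>2)" by simp
  qed
  have L2: "(\<lambda>k. measure \<mu> {tk k<..}) \<longlonglongrightarrow> a + q"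
  proof -
    have "(\<lambda>k. \<integral>x. indicator {tk k<..} x * (\<lambda>_. 1::real) x \<partial>\<mu>) \<longlonglongrightarrow> (\<integral>x. indicator {t..} x * (\<lambda>_. 1::real) x \<partial>\<mu>)"
      unfolding tk_def by (rule lim_left[OF rd]) simp
    then show ?thesis using req by simp
  qed
  have ev: "\<forall>\<^sub>F k in sequentially. T \<le> tk k"
  proof -
    have "\<forall>\<^sub>F k in sequentially. 1 / real (Suc k) < t - T"
      using tT LIMSEQ_inverse_real_of_nat by (intro order_tendstoD(2)) (auto simp: inverse_eq_divide)
    then show ?thesis by eventually_elim (auto simp: tk_def)
  qed
  have tkt: "tk k < t" for k unfolding tk_def by simp
  have ev1: "\<forall>\<^sub>F k in sequentially. measure \<mu> {tk k<..} * K \<le> (\<integral>x. indicator {tk k<..} x * (x - c)\<^sup>2 \<partial>\<mu>)"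
    using ev
  proof eventually_elim
    case (elim k)
    have qk: "0 < measure \<mu> {tk k<..}" using T[OF elim] K by (intro tv_pos) simp
    have "measure \<mu> {tk k<..} * K \<le> measure \<mu> {tk k<..} * tail_var \<mu> (tk k)"
      using T[OF elim] qk by (intro mult_left_mono) auto
    also have "\<dots> \<le> (\<integral>x. indicator {tk k<..} x * (x - c)\<^sup>2 \<partial>\<mu>)" by (rule tail_bound[OF rd sq qk])
    finally show ?case .
  qed
  have ev2: "\<forall>\<^sub>F k in sequentially. 1 - s \<le> measure \<mu> {tk k<..}"
  proof (intro always_eventually allI)
    fix k
    have "\<not> s \<le> cdf \<mu> (tk k)" using qf(1)[OF s0 s(2), of "tk k"] tkt[of k] t_def by simp
    then show "1 - s \<le> measure \<mu> {tk k<..}" using cdf_compl[OF rd, of "tk k"] by simp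
  qed
  have E2K: "(a + q) * K \<le> E2"
    by (rule tendsto_le[OF trivial_limit_sequentially L1 tendsto_mult_right[OF L2] ev1])
  have aq: "1 - s \<le> a + q"
    by (rule tendsto_le[OF trivial_limit_sequentially L2 tendsto_const ev2])
  have "((cdf \<mu> t - s) + q) * K / 2 \<le> (cdf \<mu> t - s) * D + E1"
  proof (rule arith_key)
    show "0 \<le> cdf \<mu> t - s" using sFt by simp
    show "0 \<le> q" using q0 by simp
    show "0 \<le> D" unfolding D_def by simp
    show "0 \<le> K" using K by simp
    show "cdf \<mu> t - s \<le> a" using aq cdft by simp
    show "q * K \<le> E1" by (rule E1K)
    show "(a + q) * K \<le> a * D + E1" using E2K E2eq by simp
  qed
  then show ?thesis using LQ' cdft unfolding Q_def by simp
qed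

theorem proposition3p5:
  fixes M :: "'a measure" and X :: "nat \<Rightarrow> 'a \<Rightarrow> real" and Y :: "'a \<Rightarrow> real"
  assumes "prob_space M"
    and "\<And>i. X i \<in> borel_measurable M"
    and "Y \<in> borel_measurable M"
    and "prob_space.indep_vars M (\<lambda>_. borel) X UNIV"
    and "\<And>i. distr M borel (X i) = distr M borel Y"
    and "integrable M (\<lambda>\<omega>. (Y \<omega>)\<^sup>2)"
    and "filterlim (tail_var (distr M borel Y)) at_top at_top"
  shows "AE \<omega> in M. filterlim
           (\<lambda>n. sqrt (real n) * mallows_d2 (ecdf X n \<omega>) (cdf_of (distr M borel Y)))
           at_top sequentially"
proof (rule AE_I2)
  fix \<omega>
  interpret prob_space M by fact
  define \<mu> where "\<mu> = distr M borel Y"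
  have rd: "real_distribution \<mu>"
    using prob_space_distr[OF assms(3)] by (auto simp: real_distribution_def real_distribution_axioms_def \<mu>_def)
  have sq: "integrable \<mu> (\<lambda>x. x\<^sup>2)"
    using integrable_distr_eq[OF assms(3), of "\<lambda>x. x\<^sup>2"] assms(6) by (simp add: \<mu>_def)
  have cdfeq: "cdf_of \<mu> = cdf \<mu>" by (rule ext) (simp add: cdf_of_def cdf_def)
  have tv: "filterlim (tail_var \<mu>) at_top at_top" using assms(7) by (simp add: \<mu>_def)
  show "filterlim (\<lambda>n. sqrt (real n) * mallows_d2 (ecdf X n \<omega>) (cdf_of (distr M borel Y))) at_top sequentially"
    unfolding \<mu>_def[symmetric] cdfeq
  proof (subst filterlim_at_top, intro allI)
    fix Z :: real
    define K where "K = 2 * (Z\<^sup>2 + 1)"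
    have K0: "0 < K" unfolding K_def by (smt (verit) zero_le_power2)
    have "\<forall>\<^sub>F t in at_top. K \<le> tail_var \<mu> t" using tv by (simp add: filterlim_at_top)
    then obtain T where T: "\<And>t. T \<le> t \<Longrightarrow> K \<le> tail_var \<mu> t" by (auto simp: eventually_at_top_linorder)
    have "0 < measure \<mu> {T<..}" using T[of T] K0 by (intro tv_pos) simp
    then have FT: "cdf \<mu> T < 1" using cdf_compl[OF rd, of T] by simp
    have e1: "\<forall>\<^sub>F n in sequentially. 1 / real n < 1 - cdf \<mu> T"
      using FT lim_1_over_n by (intro order_tendstoD(2)) auto
    have e2: "\<forall>\<^sub>F n in sequentially. (1::nat) \<le> n" by (rule eventually_ge_at_top)
    show "\<forall>\<^sub>F n in sequentially. Z \<le> sqrt (real n) * mallows_d2 (ecdf X n \<omega>) (cdf \<mu>)"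
      using e1 e2
    proof eventually_elim
      case (elim n)
      define L where "L = (LBINT p:{0<..<1}. \<bar>quantile (ecdf X n \<omega>) p - quantile (cdf \<mu>) p\<bar>\<^sup>2)"
      have npos: "0 < real n" using elim by simp
      have s: "cdf \<mu> T < 1 - 1 / n" "1 - 1 / n < 1" using elim npos by auto
      have "(1 - (1 - 1 / n)) * K / 2 \<le> L"
        using main_bound[OF rd sq K0 T s, of "Max ((\<lambda>i. X i \<omega>) ` {..<n})"] Ld[OF rd sq elim(2), of X \<omega>]
        unfolding L_def by linarith
      then have "K / 2 \<le> n * L" using npos by (simp add: field_simps)
      then have nL: "Z\<^sup>2 + 1 \<le> n * L" unfolding K_def by simp
      have "Z \<le> sqrt (Z\<^sup>2)" by simp
      also have "\<dots> \<le> sqrt (n * L)" using nL by (intro real_sqrt_le_mono) linarith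
      also have "\<dots> = sqrt (real n) * mallows_d2 (ecdf X n \<omega>) (cdf \<mu>)"
        unfolding mallows_d2_def L_def by (simp add: real_sqrt_mult)
      finally show ?case .
    qed
  qed
qed

end
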